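(* Let $A_1,\dots,A_n,B$ be finite formulae (type expressions with no occurrence of $\mu$). If for every $\mathbf{LA}$-frame $(\mathcal W,\rhd,R)$, every hereditary valuation $\xi$ and every $p\in\mathcal W$, $\models^\xi_p A_i$ for all $i$ implies $\models^\xi_p B$, then $\{A_1,\dots,A_n\}\vdash B$ is derivable in $\mathbf{LA}$.
   Context: Finite formulae are generated by $A::=X\mid A\to A\mid\bullet A$ over a countably infinite set of propositional (type) variables. The formal system $\mathbf{LA}$ derives judgments $\Gamma\vdash A$ ($\Gamma$ a finite set of finite formulae; $\bullet\Gamma=\{\bullet C\mid C\in\Gamma\}$) by the rules: (assump) $\Gamma\cup\{A\}\vdash A$; (nec) from $\Gamma_1\vdash A$ infer $\bullet\Gamma_1\cup\Gamma_2\vdash\bullet A$; (4) from $\Gamma\vdash\bullet A$ infer $\Gamma\vdash\bullet\bullet A$; ($\to$I) from $\Gamma\cup\{A\}\vdash B$ infer $\Gamma\vdash A\to B$; ($\to$E) from $\Gamma_1\vdash A\to B$ and $\Gamma_2\vdash A$ infer $\Gamma_1\cup\Gamma_2\vdash B$; (W) from $\Gamma\vdash\bullet(\bullet A\to A)$ infer $\Gamma\vdash\bullet A$; (approx) from $\Gamma\vdash A$ infer $\Gamma\vdash\bullet A$; (L) from $\Gamma\vdash\bullet A\to\bullet B$ infer $\Gamma\vdash\bullet(A\to B)$. Kripke semantics: an $\mathbf{LA}$-frame is a triple $(\mathcal W,\rhd,R)$ with $\mathcal W$ nonempty, $\rhd$ a binary relation with no infinite chain $p_0\rhd p_1\rhd\cdots$,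 $R$ reflexive and transitive, such that: $pRq\rhd r$ implies $p\rhd r$; $p\rhd q$ implies $pRq$; and whenever $p\rhd q\,R\,q'$ there is $r$ with $pRr\rhd q'$ such that $r\rhd s$ implies $q'Rs$ for every $s$. A valuation $\xi$ assigns to each variable a map $\mathcal W\to\{\mathbf t,\mathbf f\}$; it is hereditary if $pRq$ and $\xi(X)(p)=\mathbf t$ imply $\xi(X)(q)=\mathbf t$. Forcing for finite formulae: $\models^\xi_p X$ iff $\xi(X)(p)=\mathbf t$; $\models^\xi_p\bullet A$ iff $\models^\xi_q A$ for all $q$ with $p\rhd q$; $\models^\xi_p A\to B$ iff for all $q$ with $pRq$, $\models^\xi_q A$ implies $\models^\xi_q B$. *)

theory Defs
  imports Main
begin

datatype form = Var nat | Imp form form | Later form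

definition later_set :: "form set \<Rightarrow> form set" where
  "later_set \<Gamma> = Later ` \<Gamma>"

inductive LA :: "form set \<Rightarrow> form \<Rightarrow> bool" where
  assump: "finite \<Gamma> \<Longrightarrow> LA (\<Gamma> \<union> {A}) A"
| nec: "LA \<Gamma>1 A \<Longrightarrow> finite \<Gamma>2 \<Longrightarrow> LA (later_set \<Gamma>1 \<union> \<Gamma>2) (Later A)"
| four: "LA \<Gamma> (Later A) \<Longrightarrow> LA \<Gamma> (Later (Later A))"
| impI: "LA (\<Gamma> \<union> {A}) B \<Longrightarrow> LA \<Gamma> (Imp A B)"
| impE: "LA \<Gamma>1 (Imp A B) \<Longrightarrow> LA \<Gamma>2 A \<Longrightarrow> LA (\<Gamma>1 \<union> \<Gamma>2) B"
| W: "LA \<Gamma> (Later (Imp (Later A) A)) \<Longrightarrow> LA \<Gamma> (Later A)"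
| approx: "LA \<Gamma> A \<Longrightarrow> LA \<Gamma> (Later A)"
| L: "LA \<Gamma> (Imp (Later A) (Later B)) \<Longrightarrow> LA \<Gamma> (Later (Imp A B))"

definition LA_frame :: "'w set \<Rightarrow> ('w \<Rightarrow> 'w \<Rightarrow> bool) \<Rightarrow> ('w \<Rightarrow> 'w \<Rightarrow> bool) \<Rightarrow> bool" where
  "LA_frame Wo T R \<longleftrightarrow>
     Wo \<noteq> {} \<and>
     (\<forall>p q. T p q \<longrightarrow> p \<in> Wo \<and> q \<in> Wo) \<and>
     (\<forall>p q. R p q \<longrightarrow> p \<in> Wo \<and> q \<in> Wo) \<and>
     \<not> (\<exists>f :: nat \<Rightarrow> 'w. \<forall>i. T (f i) (f (Suc i))) \<and>
     (\<forall>p\<in>Wo. R p p) \<and>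
     (\<forall>p q r. R p q \<longrightarrow> R q r \<longrightarrow> R p r) \<and>
     (\<forall>p q r. R p q \<longrightarrow> T q r \<longrightarrow> T p r) \<and>
     (\<forall>p q. T p q \<longrightarrow> R p q) \<and>
     (\<forall>p q q'. T p q \<longrightarrow> R q q' \<longrightarrow>
        (\<exists>r. R p r \<and> T r q' \<and> (\<forall>s. T r s \<longrightarrow> R q' s)))"

definition hereditary :: "('w \<Rightarrow> 'w \<Rightarrow> bool) \<Rightarrow> (nat \<Rightarrow> 'w \<Rightarrow> bool) \<Rightarrow> bool" where
  "hereditary R \<xi> \<longleftrightarrow> (\<forall>X p q. R p q \<longrightarrow> \<xi> X p \<longrightarrow> \<xi> X q)"

fun forces :: "('w \<Rightarrow> 'w \<Rightarrow> bool) \<Rightarrow> ('w \<Rightarrow> 'w \<Rightarrow> bool) \<Rightarrow> (nat \<Rightarrow> 'w \<Rightarrow> bool) \<Rightarrow> 'w \<Rightarrow> form \<Rightarrow> bool" where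
  "forces T R \<xi> p (Var X) \<longleftrightarrow> \<xi> X p"
| "forces T R \<xi> p (Later A) \<longleftrightarrow> (\<forall>q. T p q \<longrightarrow> forces T R \<xi> q A)"
| "forces T R \<xi> p (Imp A B) \<longleftrightarrow> (\<forall>q. R p q \<longrightarrow> forces T R \<xi> q A \<longrightarrow> forces T R \<xi> q B)"

end

theory Submission
  imports Defs "HOL-Library.Countable"
begin

lemma LA_finite: "LA \<Gamma> A \<Longrightarrow> finite \<Gamma>"
  by (induction rule: LA.induct) (auto simp: later_set_def)

lemma LA_weaken: "LA \<Gamma> A \<Longrightarrow> finite \<Delta> \<Longrightarrow> LA (\<Gamma> \<union> \<Delta>) A"
proof (induction arbitrary: \<Delta> rule: LA.induct)
  case (assump \<Gamma> A)
  have e: "\<Gamma> \<union> {A} \<union> \<Delta> = (\<Gamma> \<union> \<Delta>) \<union> {A}" by auto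
  have f: "finite (\<Gamma> \<union> \<Delta>)" using assump by blast
  show ?case unfolding e by (rule LA.assump[OF f])
next
  case (nec \<Gamma>1 A \<Gamma>2)
  have e: "later_set \<Gamma>1 \<union> \<Gamma>2 \<union> \<Delta> = later_set \<Gamma>1 \<union> (\<Gamma>2 \<union> \<Delta>)" by auto
  have f: "finite (\<Gamma>2 \<union> \<Delta>)" using nec by blast
  show ?case unfolding e by (rule LA.nec[OF nec.hyps(1) f])
next
  case (four \<Gamma> A)
  show ?case by (rule LA.four[OF four.IH[OF four.prems]])
next
  case (impI \<Gamma> A B)
  have h: "LA (\<Gamma> \<union> {A} \<union> \<Delta>) B" using impI.IH[OF impI.prems] .
  have e: "\<Gamma> \<union> {A} \<union> \<Delta> = (\<Gamma> \<union> \<Delta>) \<union> {A}" by auto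
  have "LA ((\<Gamma> \<union> \<Delta>) \<union> {A}) B" using h unfolding e .
  then show ?case by (rule LA.impI)
next
  case (impE \<Gamma>1 A B \<Gamma>2)
  have h: "LA (\<Gamma>1 \<union> \<Delta> \<union> \<Gamma>2) B" using LA.impE[OF impE.IH(1)[OF impE.prems] impE.hyps(2)] .
  have e: "\<Gamma>1 \<union> \<Delta> \<union> \<Gamma>2 = \<Gamma>1 \<union> \<Gamma>2 \<union> \<Delta>" by auto
  show ?case using h unfolding e .
next
  case (W \<Gamma> A)
  show ?case by (rule LA.W[OF W.IH[OF W.prems]])
next
  case (approx \<Gamma> A)
  show ?case by (rule LA.approx[OF approx.IH[OF approx.prems]])
next
  case (L \<Gamma> A B)
  show ?case by (rule LA.L[OF L.IH[OF L.prems]])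
qed

lemma LA_mono: "LA \<Gamma> A \<Longrightarrow> \<Gamma> \<subseteq> \<Delta> \<Longrightarrow> finite \<Delta> \<Longrightarrow> LA \<Delta> A"
  using LA_weaken[of \<Gamma> A \<Delta>] by (simp add: Un_absorb1)

definition Dv :: "form set \<Rightarrow> form \<Rightarrow> bool" where
  "Dv S A \<longleftrightarrow> (\<exists>\<Gamma>. finite \<Gamma> \<and> \<Gamma> \<subseteq> S \<and> LA \<Gamma> A)"

lemma Dv_assm: "A \<in> S \<Longrightarrow> Dv S A"
  unfolding Dv_def using LA.assump[of "{}" A] by (intro exI[of _ "{A}"]) auto

lemma Dv_mono: "Dv S A \<Longrightarrow> S \<subseteq> S' \<Longrightarrow> Dv S' A"
  unfolding Dv_def by blast

lemma Dv_mp: "Dv S (Imp A B) \<Longrightarrow> Dv S A \<Longrightarrow> Dv S B"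
  unfolding Dv_def
proof -
  assume "\<exists>\<Gamma>. finite \<Gamma> \<and> \<Gamma> \<subseteq> S \<and> LA \<Gamma> (Imp A B)" "\<exists>\<Gamma>. finite \<Gamma> \<and> \<Gamma> \<subseteq> S \<and> LA \<Gamma> A"
  then obtain \<Gamma>1 \<Gamma>2 where "finite \<Gamma>1" "\<Gamma>1 \<subseteq> S" "LA \<Gamma>1 (Imp A B)" "finite \<Gamma>2" "\<Gamma>2 \<subseteq> S" "LA \<Gamma>2 A"
    by blast
  then show "\<exists>\<Gamma>. finite \<Gamma> \<and> \<Gamma> \<subseteq> S \<and> LA \<Gamma> B"
    by (intro exI[of _ "\<Gamma>1 \<union> \<Gamma>2"]) (auto intro: LA.impE)
qed

lemma Dv_imp: "Dv (insert A S) B \<Longrightarrow> Dv S (Imp A B)"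
proof -
  assume "Dv (insert A S) B"
  then obtain \<Gamma> where G: "finite \<Gamma>" "\<Gamma> \<subseteq> insert A S" "LA \<Gamma> B" unfolding Dv_def by blast
  have "LA (\<Gamma> \<union> {A}) B" using LA_weaken[OF G(3), of "{A}"] by simp
  moreover have "\<Gamma> \<union> {A} = (\<Gamma> - {A}) \<union> {A}" by auto
  ultimately have "LA (\<Gamma> - {A}) (Imp A B)" using LA.impI by metis
  then show ?thesis unfolding Dv_def using G by (intro exI[of _ "\<Gamma> - {A}"]) auto
qed

lemma Dv_later: "Dv S A \<Longrightarrow> Dv (Later ` S) (Later A)"
proof -
  assume "Dv S A"
  then obtain \<Gamma> where G: "finite \<Gamma>" "\<Gamma> \<subseteq> S" "LA \<Gamma> A" unfolding Dv_def by blast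
  have "LA (later_set \<Gamma> \<union> {}) (Later A)" using LA.nec[OF G(3), of "{}"] by simp
  then show ?thesis unfolding Dv_def later_set_def using G by (intro exI[of _ "Later ` \<Gamma>"]) auto
qed

lemma Dv_approx: "Dv S A \<Longrightarrow> Dv S (Later A)"
  unfolding Dv_def using LA.approx by blast

lemma Dv_W: "Dv S (Later (Imp (Later A) A)) \<Longrightarrow> Dv S (Later A)"
  unfolding Dv_def using LA.W by blast

lemma Dv_L: "Dv S (Imp (Later A) (Later B)) \<Longrightarrow> Dv S (Later (Imp A B))"
  unfolding Dv_def using LA.L by blast

lemma Dv_cut: "finite G \<Longrightarrow> Dv (S \<union> G) B \<Longrightarrow> \<forall>C\<in>G. Dv S C \<Longrightarrow> Dv S B"
proof (induction G arbitrary: B rule: finite_induct)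
  case empty
  then show ?case by simp
next
  case (insert x F)
  have "Dv (insert x (S \<union> F)) B" using insert.prems(1) by simp
  then have "Dv (S \<union> F) (Imp x B)" by (rule Dv_imp)
  then have i: "Dv S (Imp x B)" using insert.IH insert.prems(2) by blast
  have "Dv S x" using insert.prems(2) by blast
  then show ?case using Dv_mp[OF i] by blast
qed

lemma Dv_trans: "Dv T B \<Longrightarrow> \<forall>C\<in>T. Dv S C \<Longrightarrow> Dv S B"
proof -
  assume a: "Dv T B" "\<forall>C\<in>T. Dv S C"
  then obtain \<Gamma> where G: "finite \<Gamma>" "\<Gamma> \<subseteq> T" "LA \<Gamma> B" unfolding Dv_def by blast
  have "Dv (S \<union> \<Gamma>) B" unfolding Dv_def using G by blast
  then show ?thesis using Dv_cut[OF G(1)] a G by blast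
qed

definition cl :: "form set \<Rightarrow> form set" where "cl S = {A. Dv S A}"
definition th :: "form set \<Rightarrow> bool" where "th v \<longleftrightarrow> (\<forall>A. Dv v A \<longrightarrow> A \<in> v)"

lemma th_cl: "th (cl S)"
  unfolding th_def cl_def using Dv_trans by blast

lemma sub_cl: "S \<subseteq> cl S"
  unfolding cl_def using Dv_assm by blast

lemma th_mp: "th v \<Longrightarrow> Imp A B \<in> v \<Longrightarrow> A \<in> v \<Longrightarrow> B \<in> v"
  unfolding th_def using Dv_mp Dv_assm by blast

definition nxt :: "form set \<Rightarrow> form set" where "nxt v = {A. Later A \<in> v}"

lemma th_nxt: assumes "th v" shows "th (nxt v)"
proof -
  have "A \<in> nxt v" if d: "Dv (nxt v) A" for A
  proof -
    have "Dv (Later ` nxt v) (Later A)" using Dv_later[OF d] .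
    moreover have "Later ` nxt v \<subseteq> v" unfolding nxt_def by auto
    ultimately have "Dv v (Later A)" using Dv_mono by blast
    then have "Later A \<in> v" using assms unfolding th_def by blast
    then show ?thesis by (simp add: nxt_def)
  qed
  then show ?thesis unfolding th_def by blast
qed

lemma sub_nxt: "th v \<Longrightarrow> v \<subseteq> nxt v"
  unfolding th_def nxt_def using Dv_assm Dv_approx by blast

lemma mono_nxt: "v \<subseteq> u \<Longrightarrow> nxt v \<subseteq> nxt u"
  unfolding nxt_def by blast

lemma mono_nxt_pow: "v \<subseteq> u \<Longrightarrow> (nxt ^^ j) v \<subseteq> (nxt ^^ j) u"
  by (induction j) (auto dest: mono_nxt)

lemma loeb:
  assumes "th v" "Later A \<notin> v"
  shows "A \<notin> cl (nxt v \<union> {Later A})"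
proof
  assume "A \<in> cl (nxt v \<union> {Later A})"
  then have "Dv (insert (Later A) (nxt v)) A" unfolding cl_def by simp
  then have "Dv (nxt v) (Imp (Later A) A)" by (rule Dv_imp)
  then have "Dv (Later ` nxt v) (Later (Imp (Later A) A))" by (rule Dv_later)
  moreover have "Later ` nxt v \<subseteq> v" unfolding nxt_def by auto
  ultimately have "Dv v (Later (Imp (Later A) A))" using Dv_mono by blast
  then have "Dv v (Later A)" by (rule Dv_W)
  then show False using assms unfolding th_def by blast
qed

lemma L_aux:
  assumes "finite G" "th p" "th q" "nxt p \<subseteq> q"
  shows "G \<subseteq> q \<Longrightarrow> Dv (p \<union> Later ` G) (Later C) \<Longrightarrow> C \<in> q"
  using assms(1)
proof (induction G arbitrary: C rule: finite_induct)
  case empty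
  then have "Later C \<in> p" using assms(2) unfolding th_def by simp
  then show ?case using assms(4) unfolding nxt_def by blast
next
  case (insert x F)
  have "Dv (insert (Later x) (p \<union> Later ` F)) (Later C)" using insert.prems(2) by simp
  then have "Dv (p \<union> Later ` F) (Imp (Later x) (Later C))" by (rule Dv_imp)
  then have "Dv (p \<union> Later ` F) (Later (Imp x C))" by (rule Dv_L)
  then have "Imp x C \<in> q" using insert by auto
  then show ?case using th_mp[OF assms(3)] insert.prems(1) by auto
qed

lemma L_arg:
  assumes "th p" "th q" "nxt p \<subseteq> q"
  shows "nxt (cl (p \<union> Later ` q)) \<subseteq> q"
proof
  fix C assume "C \<in> nxt (cl (p \<union> Later ` q))"
  then have "Dv (p \<union> Later ` q) (Later C)" unfolding nxt_def cl_def by simp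
  then obtain \<Gamma> where G: "finite \<Gamma>" "\<Gamma> \<subseteq> p \<union> Later ` q" "LA \<Gamma> (Later C)" unfolding Dv_def by blast
  define H where "H = {D \<in> q. Later D \<in> \<Gamma>}"
  have "inj Later" by (auto simp: inj_on_def)
  then have "finite (Later -` \<Gamma>)" using G(1) by (simp add: finite_vimageI)
  moreover have "H \<subseteq> Later -` \<Gamma>" unfolding H_def by auto
  ultimately have fH: "finite H" using finite_subset by blast
  have "\<Gamma> \<subseteq> p \<union> Later ` H" using G(2) unfolding H_def by auto
  then have "Dv (p \<union> Later ` H) (Later C)" unfolding Dv_def using G by blast
  moreover have "H \<subseteq> q" unfolding H_def by auto
  ultimately show "C \<in> q" using L_aux[OF fH assms] by blast
qed

section \<open>Level measure\<close>

definition lvalid :: "form set \<Rightarrow> nat \<Rightarrow> form set \<Rightarrow> bool" where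
  "lvalid \<Psi> n v \<longleftrightarrow> (\<exists>j. j + card (\<Psi> - (nxt ^^ j) v) \<le> n)"

lemma lvalid_mono:
  assumes "finite \<Psi>" "lvalid \<Psi> n v" "v \<subseteq> u" shows "lvalid \<Psi> n u"
proof -
  obtain j where j: "j + card (\<Psi> - (nxt ^^ j) v) \<le> n" using assms(2) unfolding lvalid_def by blast
  have "card (\<Psi> - (nxt ^^ j) u) \<le> card (\<Psi> - (nxt ^^ j) v)"
    using mono_nxt_pow[OF assms(3), of j] assms(1) by (intro card_mono) auto
  then show ?thesis unfolding lvalid_def using j by (intro exI[of _ j]) auto
qed

lemma lvalid_init: "finite \<Psi> \<Longrightarrow> lvalid \<Psi> (card \<Psi>) v"
  unfolding lvalid_def by (intro exI[of _ 0]) (auto intro: card_mono)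

lemma lvalid_nxt:
  assumes "finite \<Psi>" "th v" "lvalid \<Psi> n v" "Later A \<in> \<Psi>" "Later A \<notin> v"
  shows "0 < n \<and> lvalid \<Psi> (n - 1) (cl (nxt v \<union> {Later A}))"
proof -
  define u where "u = cl (nxt v \<union> {Later A})"
  have nu: "nxt v \<subseteq> u" unfolding u_def using sub_cl by blast
  have vu: "v \<subseteq> u" using sub_nxt[OF assms(2)] nu by blast
  have Au: "Later A \<in> u" unfolding u_def using sub_cl by blast
  obtain j where j: "j + card (\<Psi> - (nxt ^^ j) v) \<le> n" using assms(3) unfolding lvalid_def by blast
  show ?thesis
  proof (cases j)
    case 0
    have "\<Psi> - u \<subset> \<Psi> - v" using vu Au assms(4,5) by blast
    then have "card (\<Psi> - u) < card (\<Psi> - v)" using assms(1) by (intro psubset_card_mono) auto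
    then show ?thesis using j 0 unfolding lvalid_def u_def[symmetric] by (intro conjI exI[of _ 0]) auto
  next
    case (Suc i)
    have "(nxt ^^ j) v = (nxt ^^ i) (nxt v)" using Suc by (simp only: funpow_Suc_right comp_apply)
    then have "(nxt ^^ j) v \<subseteq> (nxt ^^ i) u" using mono_nxt_pow[OF nu] by simp
    then have "card (\<Psi> - (nxt ^^ i) u) \<le> card (\<Psi> - (nxt ^^ j) v)"
      using assms(1) by (intro card_mono) auto
    then show ?thesis using j Suc unfolding lvalid_def u_def[symmetric] by (intro conjI exI[of _ i]) auto
  qed
qed

lemma lvalid_lw:
  assumes "finite \<Psi>" "lvalid \<Psi> k q" "q \<subseteq> nxt r" shows "lvalid \<Psi> (Suc k) r"
proof -
  obtain j where j: "j + card (\<Psi> - (nxt ^^ j) q) \<le> k" using assms(2) unfolding lvalid_def by blast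
  have "(nxt ^^ Suc j) r = (nxt ^^ j) (nxt r)" by (simp only: funpow_Suc_right comp_apply)
  then have "(nxt ^^ j) q \<subseteq> (nxt ^^ Suc j) r" using mono_nxt_pow[OF assms(3)] by simp
  then have "card (\<Psi> - (nxt ^^ Suc j) r) \<le> card (\<Psi> - (nxt ^^ j) q)"
    using assms(1) by (intro card_mono) auto
  then show ?thesis using j unfolding lvalid_def by (intro exI[of _ "Suc j"]) auto
qed

section \<open>Canonical model\<close>

instance form :: countable by countable_datatype

datatype ctree = Init | Ext ctree form | Nx ctree form | Lw ctree ctree

instance ctree :: countable by countable_datatype

primrec evc :: "form set \<Rightarrow> ctree \<Rightarrow> form set" where
  "evc G Init = cl G"
| "evc G (Ext c A) = cl (evc G c \<union> {A})"
| "evc G (Nx c A) = cl (nxt (evc G c) \<union> {Later A})"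
| "evc G (Lw c d) = cl (evc G c \<union> Later ` evc G d)"

lemma th_evc: "th (evc G c)"
  by (cases c) (auto simp: th_cl)

definition Wm :: "form set \<Rightarrow> form set \<Rightarrow> nat set" where
  "Wm G \<Psi> = (\<lambda>x. to_nat (x :: nat \<times> ctree)) ` {(n, c). lvalid \<Psi> n (evc G c)}"

definition lev :: "nat \<Rightarrow> nat" where "lev a = fst (from_nat a :: nat \<times> ctree)"
definition cd :: "nat \<Rightarrow> ctree" where "cd a = snd (from_nat a :: nat \<times> ctree)"
definition Em :: "form set \<Rightarrow> nat \<Rightarrow> form set" where "Em G a = evc G (cd a)"

definition Tm :: "form set \<Rightarrow> form set \<Rightarrow> nat \<Rightarrow> nat \<Rightarrow> bool" where
  "Tm G \<Psi> a b \<longleftrightarrow> a \<in> Wm G \<Psi> \<and> b \<in> Wm G \<Psi> \<and> lev b < lev a \<and> nxt (Em G a) \<subseteq> Em G b"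

definition Rm :: "form set \<Rightarrow> form set \<Rightarrow> nat \<Rightarrow> nat \<Rightarrow> bool" where
  "Rm G \<Psi> a b \<longleftrightarrow> a \<in> Wm G \<Psi> \<and> b \<in> Wm G \<Psi> \<and> lev b \<le> lev a \<and> Em G a \<subseteq> Em G b"

definition xim :: "form set \<Rightarrow> nat \<Rightarrow> nat \<Rightarrow> bool" where
  "xim G X a \<longleftrightarrow> Var X \<in> Em G a"

lemma to_nat_facts:
  "lev (to_nat (n, c)) = n" "Em G (to_nat (n, c)) = evc G c"
  unfolding lev_def cd_def Em_def by simp_all

lemma in_Wm: "lvalid \<Psi> n (evc G c) \<Longrightarrow> to_nat (n, c) \<in> Wm G \<Psi>"
  unfolding Wm_def by auto

lemma Wm_valid: "a \<in> Wm G \<Psi> \<Longrightarrow> lvalid \<Psi> (lev a) (Em G a) \<and> a = to_nat (lev a, cd a)"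
  unfolding Wm_def by (auto simp: to_nat_facts lev_def cd_def Em_def)

lemma th_Em: "th (Em G a)"
  unfolding Em_def by (rule th_evc)

abbreviation "frc G \<Psi> \<equiv> forces (Tm G \<Psi>) (Rm G \<Psi>) (xim G)"

lemma Wm_dest: "a \<in> Wm G \<Psi> \<Longrightarrow> lvalid \<Psi> (lev a) (Em G a)"
  using Wm_valid by blast

lemma truth_imp:
  assumes fin: "finite \<Psi>" and aW: "a \<in> Wm G \<Psi>"
    and IHA: "\<And>b. b \<in> Wm G \<Psi> \<Longrightarrow> frc G \<Psi> b A \<longleftrightarrow> A \<in> Em G b"
    and IHB: "\<And>b. b \<in> Wm G \<Psi> \<Longrightarrow> frc G \<Psi> b B \<longleftrightarrow> B \<in> Em G b"
  shows "frc G \<Psi> a (Imp A B) \<longleftrightarrow> Imp A B \<in> Em G a"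
proof
  assume f: "frc G \<Psi> a (Imp A B)"
  show "Imp A B \<in> Em G a"
  proof (rule ccontr)
    assume nI: "Imp A B \<notin> Em G a"
    define b where "b = to_nat (lev a, Ext (cd a) A)"
    have Eb: "Em G b = cl (Em G a \<union> {A})" unfolding b_def to_nat_facts by (simp add: Em_def)
    have lb: "lev b = lev a" unfolding b_def to_nat_facts ..
    have va: "lvalid \<Psi> (lev a) (Em G a)" using Wm_dest[OF aW] .
    have sab: "Em G a \<subseteq> Em G b" unfolding Eb using sub_cl[of "Em G a \<union> {A}"] by blast
    have "lvalid \<Psi> (lev a) (evc G (Ext (cd a) A))" using lvalid_mono[OF fin va sab] Eb by (simp add: Em_def)
    then have bW: "b \<in> Wm G \<Psi>" unfolding b_def by (rule in_Wm)
    have R: "Rm G \<Psi> a b" unfolding Rm_def using aW bW lb sab by simp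
    have Ab: "A \<in> Em G b" unfolding Eb using sub_cl by blast
    have Bb: "B \<notin> Em G b"
    proof
      assume "B \<in> Em G b"
      then have "Dv (insert A (Em G a)) B" unfolding Eb cl_def by simp
      then have "Dv (Em G a) (Imp A B)" by (rule Dv_imp)
      then show False using nI th_Em unfolding th_def by blast
    qed
    have "frc G \<Psi> b A" using IHA[OF bW] Ab by blast
    moreover have "\<not> frc G \<Psi> b B" using IHB[OF bW] Bb by blast
    moreover have "\<forall>q. Rm G \<Psi> a q \<longrightarrow> frc G \<Psi> q A \<longrightarrow> frc G \<Psi> q B" using f by simp
    ultimately show False using R by blast
  qed
next
  assume I: "Imp A B \<in> Em G a"
  have "frc G \<Psi> q B" if R: "Rm G \<Psi> a q" and fA: "frc G \<Psi> q A" for q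
  proof -
    have qW: "q \<in> Wm G \<Psi>" using R unfolding Rm_def by blast
    have "A \<in> Em G q" using IHA[OF qW] fA by blast
    moreover have "Imp A B \<in> Em G q" using I R unfolding Rm_def by blast
    ultimately have "B \<in> Em G q" using th_mp[OF th_Em] by blast
    then show "frc G \<Psi> q B" using IHB[OF qW] by blast
  qed
  then show "frc G \<Psi> a (Imp A B)" by simp
qed

lemma truth_later:
  assumes fin: "finite \<Psi>" and aW: "a \<in> Wm G \<Psi>" and LP: "Later A \<in> \<Psi>"
    and IHA: "\<And>b. b \<in> Wm G \<Psi> \<Longrightarrow> frc G \<Psi> b A \<longleftrightarrow> A \<in> Em G b"
  shows "frc G \<Psi> a (Later A) \<longleftrightarrow> Later A \<in> Em G a"
proof
  assume f: "frc G \<Psi> a (Later A)"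
  show "Later A \<in> Em G a"
  proof (rule ccontr)
    assume nL: "Later A \<notin> Em G a"
    have va: "lvalid \<Psi> (lev a) (Em G a)" using Wm_dest[OF aW] .
    have vn: "0 < lev a" "lvalid \<Psi> (lev a - 1) (cl (nxt (Em G a) \<union> {Later A}))"
      using lvalid_nxt[OF fin th_Em va LP nL] by auto
    define b where "b = to_nat (lev a - 1, Nx (cd a) A)"
    have Eb: "Em G b = cl (nxt (Em G a) \<union> {Later A})" unfolding b_def to_nat_facts by (simp add: Em_def)
    have lb: "lev b = lev a - 1" unfolding b_def to_nat_facts ..
    have "lvalid \<Psi> (lev a - 1) (evc G (Nx (cd a) A))" using vn(2) Eb by (simp add: Em_def)
    then have bW: "b \<in> Wm G \<Psi>" unfolding b_def by (rule in_Wm)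
    have sab: "nxt (Em G a) \<subseteq> Em G b" unfolding Eb using sub_cl by blast
    have T: "Tm G \<Psi> a b" unfolding Tm_def using aW bW lb sab vn(1) by simp
    have "A \<notin> Em G b" unfolding Eb using loeb[OF th_Em nL] .
    then have "\<not> frc G \<Psi> b A" using IHA[OF bW] by blast
    moreover have "\<forall>q. Tm G \<Psi> a q \<longrightarrow> frc G \<Psi> q A" using f by simp
    ultimately show False using T by blast
  qed
next
  assume I: "Later A \<in> Em G a"
  have "frc G \<Psi> q A" if T: "Tm G \<Psi> a q" for q
  proof -
    have qW: "q \<in> Wm G \<Psi>" using T unfolding Tm_def by blast
    have "A \<in> Em G q" using I T unfolding Tm_def nxt_def by blast
    then show ?thesis using IHA[OF qW] by blast
  qed
  then show "frc G \<Psi> a (Later A)" by simp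
qed

lemma truth:
  assumes fin: "finite \<Psi>"
    and ci: "\<And>A B. Imp A B \<in> \<Psi> \<Longrightarrow> A \<in> \<Psi> \<and> B \<in> \<Psi>"
    and cL: "\<And>A. Later A \<in> \<Psi> \<Longrightarrow> A \<in> \<Psi>"
  shows "C \<in> \<Psi> \<Longrightarrow> a \<in> Wm G \<Psi> \<Longrightarrow> frc G \<Psi> a C \<longleftrightarrow> C \<in> Em G a"
proof (induction C arbitrary: a)
  case (Var x)
  then show ?case by (simp add: xim_def)
next
  case (Imp A B)
  have AB: "A \<in> \<Psi>" "B \<in> \<Psi>" using ci[OF Imp.prems(1)] by auto
  show ?case using truth_imp[OF fin Imp.prems(2)] Imp.IH(1)[OF AB(1)] Imp.IH(2)[OF AB(2)] by blast
next
  case (Later A)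
  have A: "A \<in> \<Psi>" using cL[OF Later.prems(1)] .
  show ?case using truth_later[OF fin Later.prems(2) Later.prems(1)] Later.IH[OF A] by blast
qed

lemma no_chain:
  assumes "\<forall>i. Tm G \<Psi> (f i) (f (Suc i))" shows False
proof -
  have dec: "\<And>i. lev (f (Suc i)) < lev (f i)" using assms unfolding Tm_def by blast
  have le: "lev (f i) + i \<le> lev (f 0)" for i
  proof (induction i)
    case 0
    show ?case by simp
  next
    case (Suc i)
    from dec[of i] Suc.IH show ?case by linarith
  qed
  from le[of "Suc (lev (f 0))"] show False by simp
qed

lemma Lcond:
  assumes fin: "finite \<Psi>" and T: "Tm G \<Psi> p q" and R: "Rm G \<Psi> q q'"
  shows "\<exists>r. Rm G \<Psi> p r \<and> Tm G \<Psi> r q' \<and> (\<forall>s. Tm G \<Psi> r s \<longrightarrow> Rm G \<Psi> q' s)"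
proof -
  define r where "r = to_nat (Suc (lev q'), Lw (cd p) (cd q'))"
  have Er: "Em G r = cl (Em G p \<union> Later ` Em G q')" unfolding r_def to_nat_facts by (simp add: Em_def)
  have lr: "lev r = Suc (lev q')" unfolding r_def to_nat_facts ..
  have q'W: "q' \<in> Wm G \<Psi>" using R unfolding Rm_def by blast
  have pW: "p \<in> Wm G \<Psi>" using T unfolding Tm_def by blast
  have sq: "Em G q' \<subseteq> nxt (Em G r)"
  proof
    fix C assume "C \<in> Em G q'"
    then have "Later C \<in> Em G p \<union> Later ` Em G q'" by blast
    then have "Later C \<in> Em G r" unfolding Er using sub_cl[of "Em G p \<union> Later ` Em G q'"] by blast
    then show "C \<in> nxt (Em G r)" by (simp add: nxt_def)
  qed
  have "lvalid \<Psi> (Suc (lev q')) (Em G r)" using lvalid_lw[OF fin Wm_dest[OF q'W] sq] .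
  then have "lvalid \<Psi> (Suc (lev q')) (evc G (Lw (cd p) (cd q')))" unfolding r_def by (simp add: to_nat_facts)
  then have rW: "r \<in> Wm G \<Psi>" unfolding r_def by (rule in_Wm)
  have npq: "nxt (Em G p) \<subseteq> Em G q'" using T R unfolding Tm_def Rm_def by blast
  have Lr: "nxt (Em G r) \<subseteq> Em G q'" unfolding Er using L_arg[OF th_Em th_Em npq] .
  have lv1: "lev q < lev p" using T unfolding Tm_def by blast
  have lv2: "lev q' \<le> lev q" using R unfolding Rm_def by blast
  have lv: "Suc (lev q') \<le> lev p" using lv1 lv2 by simp
  have pr: "Em G p \<subseteq> Em G r" unfolding Er using sub_cl[of "Em G p \<union> Later ` Em G q'"] by blast
  have 1: "Rm G \<Psi> p r" unfolding Rm_def using pW rW lv lr pr by simp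
  have 2: "Tm G \<Psi> r q'" unfolding Tm_def using rW q'W Lr lr by simp
  have 3: "Rm G \<Psi> q' s" if "Tm G \<Psi> r s" for s
  proof -
    have h: "lev s < lev r" "nxt (Em G r) \<subseteq> Em G s" "s \<in> Wm G \<Psi>" using that unfolding Tm_def by blast+
    have "lev s \<le> lev q'" using h(1) lr by simp
    moreover have "Em G q' \<subseteq> Em G s" using sq h(2) by blast
    ultimately show ?thesis unfolding Rm_def using q'W h(3) by blast
  qed
  show ?thesis using 1 2 3 by blast
qed

lemma Rm_trans: "Rm G \<Psi> p q \<Longrightarrow> Rm G \<Psi> q r \<Longrightarrow> Rm G \<Psi> p r"
  unfolding Rm_def by (meson order_trans)

lemma RT: "Rm G \<Psi> p q \<Longrightarrow> Tm G \<Psi> q r \<Longrightarrow> Tm G \<Psi> p r"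
proof -
  assume a: "Rm G \<Psi> p q" "Tm G \<Psi> q r"
  then have "nxt (Em G p) \<subseteq> nxt (Em G q)" unfolding Rm_def using mono_nxt by blast
  with a show "Tm G \<Psi> p r" unfolding Rm_def Tm_def by (meson order_trans order.strict_trans2)
qed

lemma TR: "Tm G \<Psi> p q \<Longrightarrow> Rm G \<Psi> p q"
proof -
  assume a: "Tm G \<Psi> p q"
  have "Em G p \<subseteq> nxt (Em G p)" by (rule sub_nxt[OF th_Em])
  with a show "Rm G \<Psi> p q" unfolding Rm_def Tm_def by (meson order_trans less_imp_le)
qed

lemma frame:
  assumes fin: "finite \<Psi>"
  shows "LA_frame (Wm G \<Psi>) (Tm G \<Psi>) (Rm G \<Psi>)"
proof -
  have a1: "Wm G \<Psi> \<noteq> {}" using in_Wm[OF lvalid_init[OF fin]] by blast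
  have a2: "\<not> (\<exists>f. \<forall>i. Tm G \<Psi> (f i) (f (Suc i)))" using no_chain by blast
  have a3: "\<forall>p q. Tm G \<Psi> p q \<longrightarrow> p \<in> Wm G \<Psi> \<and> q \<in> Wm G \<Psi>" by (unfold Tm_def) blast
  have a4: "\<forall>p q. Rm G \<Psi> p q \<longrightarrow> p \<in> Wm G \<Psi> \<and> q \<in> Wm G \<Psi>" by (unfold Rm_def) blast
  have a5: "\<forall>p\<in>Wm G \<Psi>. Rm G \<Psi> p p" by (unfold Rm_def) blast
  have a6: "\<forall>p q r. Rm G \<Psi> p q \<longrightarrow> Rm G \<Psi> q r \<longrightarrow> Rm G \<Psi> p r" using Rm_trans by blast
  have a7: "\<forall>p q r. Rm G \<Psi> p q \<longrightarrow> Tm G \<Psi> q r \<longrightarrow> Tm G \<Psi> p r" using RT by blast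
  have a8: "\<forall>p q. Tm G \<Psi> p q \<longrightarrow> Rm G \<Psi> p q" using TR by blast
  have a9: "\<forall>p q q'. Tm G \<Psi> p q \<longrightarrow> Rm G \<Psi> q q' \<longrightarrow>
        (\<exists>r. Rm G \<Psi> p r \<and> Tm G \<Psi> r q' \<and> (\<forall>s. Tm G \<Psi> r s \<longrightarrow> Rm G \<Psi> q' s))"
    using Lcond[OF fin] by blast
  show ?thesis unfolding LA_frame_def using a1 a2 a3 a4 a5 a6 a7 a8 a9 by blast
qed

fun sub :: "form \<Rightarrow> form set" where
  "sub (Var x) = {Var x}"
| "sub (Imp A B) = insert (Imp A B) (sub A \<union> sub B)"
| "sub (Later A) = insert (Later A) (sub A)"

lemma sub_self: "C \<in> sub C" by (cases C) auto
lemma finite_sub: "finite (sub C)" by (induction C) auto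
lemma sub_imp: "Imp A B \<in> sub C \<Longrightarrow> A \<in> sub C \<and> B \<in> sub C"
  by (induction C) (auto intro: sub_self)
lemma sub_later: "Later A \<in> sub C \<Longrightarrow> A \<in> sub C"
  by (induction C) (auto intro: sub_self)

theorem theorem10:
  fixes As :: "form list" and B :: form
  assumes "\<And>(Wo :: nat set) T R \<xi> p.
             LA_frame Wo T R \<Longrightarrow> hereditary R \<xi> \<Longrightarrow> p \<in> Wo \<Longrightarrow>
             (\<forall>A\<in>set As. forces T R \<xi> p A) \<Longrightarrow> forces T R \<xi> p B"
  shows "LA (set As) B"
proof -
  define \<Psi> where "\<Psi> = \<Union> (sub ` set (B # As))"
  define G where "G = set As"
  have fin: "finite \<Psi>" unfolding \<Psi>_def using finite_sub by auto
  have ci: "\<And>A B. Imp A B \<in> \<Psi> \<Longrightarrow> A \<in> \<Psi> \<and> B \<in> \<Psi>" unfolding \<Psi>_def using sub_imp by blast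
  have cL: "\<And>A. Later A \<in> \<Psi> \<Longrightarrow> A \<in> \<Psi>" unfolding \<Psi>_def using sub_later by blast
  define p0 where "p0 = to_nat (card \<Psi>, Init)"
  have p0W: "p0 \<in> Wm G \<Psi>" unfolding p0_def using in_Wm[OF lvalid_init[OF fin]] by blast
  have Ep0: "Em G p0 = cl G" unfolding p0_def by (simp add: to_nat_facts)
  have her: "hereditary (Rm G \<Psi>) (xim G)" unfolding hereditary_def Rm_def xim_def by blast
  have "\<forall>A\<in>set As. forces (Tm G \<Psi>) (Rm G \<Psi>) (xim G) p0 A"
  proof
    fix A assume A: "A \<in> set As"
    then have "A \<in> \<Psi>" unfolding \<Psi>_def using sub_self by auto
    moreover have "A \<in> Em G p0" using Ep0 sub_cl A unfolding G_def by blast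
    ultimately show "forces (Tm G \<Psi>) (Rm G \<Psi>) (xim G) p0 A" using truth[OF fin ci cL _ p0W] by blast
  qed
  then have "forces (Tm G \<Psi>) (Rm G \<Psi>) (xim G) p0 B" using assms[OF frame[OF fin] her p0W] by blast
  moreover have "B \<in> \<Psi>" unfolding \<Psi>_def using sub_self by auto
  ultimately have "B \<in> cl G" using truth[OF fin ci cL _ p0W] Ep0 by blast
  then obtain \<Gamma> where "finite \<Gamma>" "\<Gamma> \<subseteq> set As" "LA \<Gamma> B" unfolding cl_def Dv_def G_def by blast
  then show ?thesis using LA_mono by blast
qed

end
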